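(* Let $\mathbb{R}^n_s$ be $\mathbb{R}^n$ with a non-degenerate symmetric bilinear form of signature $(n-s,s)$, let $G\subset\mathrm{Iso}(\mathbb{R}^n_s)$ be a real Zariski-closed subgroup whose centralizer $L=\mathrm{Z}_{\mathrm{Iso}(\mathbb{R}^n_s)}(G)$ acts transitively on $\mathbb{R}^n$, and let $U$ be the unipotent radical of $L$; assume $U$ acts transitively on $\mathbb{R}^n$. Fix $p\in\mathbb{R}^n$, let $F_p=G.p$, $U_p$ the stabilizer of $p$ in $U$, $U_{F_p}=\{u\in U\mid u.F_p\subseteq F_p\}$ (a subgroup containing $U_p$ as a normal subgroup) and $\tilde U=U_{F_p}/U_p$, acting on $U/U_p$ from the right by $uU_p\cdot \tilde u U_p=u\tilde uU_p$. Let $\Psi:U/U_p\to\mathbb{R}^n$, $uU_p\mapsto u.p$. Then $\Psi$ induces a bijection from the set of orbits of the right action of $\tilde U$ on $U/U_p$ to the set of orbits of $G$ on $\mathbb{R}^n$; more precisely, $\Psi$ maps the orbit $uU_p\cdot\tilde U$ onto the orbit $G.(u.p)$. *)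

theory Defs
  imports "HOL-Analysis.Analysis"
begin

text \<open>Isometries of R^n with the bilinear form (x,y) |-> x^T Q y, represented as
  pairs (A,b) standing for the affine map x |-> A x + b with A^T Q A = Q.\<close>

type_synonym 'n aff = "(real^'n^'n) \<times> (real^'n)"

definition iso_act :: "'n::finite aff \<Rightarrow> real^'n \<Rightarrow> real^'n" where
  "iso_act g x = fst g *v x + snd g"

definition iso_mult :: "'n::finite aff \<Rightarrow> 'n aff \<Rightarrow> 'n aff" where
  "iso_mult g h = (fst g ** fst h, fst g *v snd h + snd g)"

definition iso_one :: "'n::finite aff" where
  "iso_one = (mat 1, 0)"

definition iso_inv :: "'n::finite aff \<Rightarrow> 'n aff" where
  "iso_inv g = (matrix_inv (fst g), - (matrix_inv (fst g) *v snd g))"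

definition Iso :: "real^'n^'n \<Rightarrow> 'n::finite aff set" where
  "Iso Q = {g. transpose (fst g) ** Q ** fst g = Q}"

definition is_subgroup :: "real^'n^'n \<Rightarrow> 'n::finite aff set \<Rightarrow> bool" where
  "is_subgroup Q H \<longleftrightarrow> H \<subseteq> Iso Q \<and> iso_one \<in> H \<and>
     (\<forall>x\<in>H. \<forall>y\<in>H. iso_mult x y \<in> H) \<and> (\<forall>x\<in>H. iso_inv x \<in> H)"

definition is_normal_in :: "'n::finite aff set \<Rightarrow> 'n aff set \<Rightarrow> bool" where
  "is_normal_in H K \<longleftrightarrow> H \<subseteq> K \<and>
     (\<forall>k\<in>K. \<forall>h\<in>H. iso_mult (iso_mult k h) (iso_inv k) \<in> H)"

inductive_set poly_fun :: "('n::finite aff \<Rightarrow> real) set" where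
  pf_const: "(\<lambda>_. c) \<in> poly_fun"
| pf_mat: "(\<lambda>g. fst g $ i $ j) \<in> poly_fun"
| pf_vec: "(\<lambda>g. snd g $ i) \<in> poly_fun"
| pf_add: "f \<in> poly_fun \<Longrightarrow> h \<in> poly_fun \<Longrightarrow> (\<lambda>g. f g + h g) \<in> poly_fun"
| pf_mult: "f \<in> poly_fun \<Longrightarrow> h \<in> poly_fun \<Longrightarrow> (\<lambda>g. f g * h g) \<in> poly_fun"

definition zariski_closed :: "'n::finite aff set \<Rightarrow> bool" where
  "zariski_closed S \<longleftrightarrow> (\<exists>P \<subseteq> poly_fun. S = {g. \<forall>f\<in>P. f g = 0})"

definition zariski_connected :: "'n::finite aff set \<Rightarrow> bool" where
  "zariski_connected H \<longleftrightarrow>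
     \<not> (\<exists>C1 C2. zariski_closed C1 \<and> zariski_closed C2 \<and> H \<subseteq> C1 \<union> C2 \<and>
              H \<inter> C1 \<inter> C2 = {} \<and> H \<inter> C1 \<noteq> {} \<and> H \<inter> C2 \<noteq> {})"

text \<open>(A,b) is unipotent iff the linear part A is unipotent, i.e. A - I is nilpotent
  (equivalently the (n+1)x(n+1) matrix [[A,b],[0,1]] is unipotent).\<close>
definition unipotent :: "'n::finite aff \<Rightarrow> bool" where
  "unipotent g \<longleftrightarrow> (\<exists>k. ((\<lambda>M. (fst g - mat 1) ** M) ^^ k) (mat 1) = 0)"

definition conn_normal_unip_subgroup :: "real^'n^'n \<Rightarrow> 'n::finite aff set \<Rightarrow> 'n aff set \<Rightarrow> bool" where
  "conn_normal_unip_subgroup Q L V \<longleftrightarrow> is_subgroup Q V \<and> is_normal_in V L \<and>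
     zariski_closed V \<and> zariski_connected V \<and> (\<forall>v\<in>V. unipotent v)"

definition unipotent_radical :: "real^'n^'n \<Rightarrow> 'n::finite aff set \<Rightarrow> 'n aff set \<Rightarrow> bool" where
  "unipotent_radical Q L U \<longleftrightarrow> conn_normal_unip_subgroup Q L U \<and>
     (\<forall>V. conn_normal_unip_subgroup Q L V \<longrightarrow> V \<subseteq> U)"

definition centralizer :: "real^'n^'n \<Rightarrow> 'n::finite aff set \<Rightarrow> 'n aff set" where
  "centralizer Q G = {l \<in> Iso Q. \<forall>g\<in>G. iso_mult l g = iso_mult g l}"

definition orbit :: "'n::finite aff set \<Rightarrow> real^'n \<Rightarrow> (real^'n) set" where
  "orbit G x = (\<lambda>g. iso_act g x) ` G"

definition stabilizer :: "'n::finite aff set \<Rightarrow> real^'n \<Rightarrow> 'n aff set" where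
  "stabilizer U p = {u \<in> U. iso_act u p = p}"

definition set_stabilizer :: "'n::finite aff set \<Rightarrow> (real^'n) set \<Rightarrow> 'n aff set" where
  "set_stabilizer U F = {u \<in> U. iso_act u ` F \<subseteq> F}"

definition lcoset :: "'n::finite aff \<Rightarrow> 'n aff set \<Rightarrow> 'n aff set" where
  "lcoset u H = (\<lambda>v. iso_mult u v) ` H"

text \<open>Orbit of uU_p under the right action of U_F/U_p: {u w U_p | w in U_F}.\<close>
definition right_orbit :: "'n::finite aff \<Rightarrow> 'n aff set \<Rightarrow> 'n aff set \<Rightarrow> 'n aff set set" where
  "right_orbit u UF Up = {lcoset (iso_mult u w) Up | w. w \<in> UF}"

definition Psi :: "'n::finite aff set \<Rightarrow> 'n aff set \<Rightarrow> real^'n \<Rightarrow> 'n aff set \<Rightarrow> real^'n" where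
  "Psi U Up p C = iso_act (SOME u. u \<in> U \<and> C = lcoset u Up) p"

end

theory Submission
  imports Defs
begin

lemma act_mult: "iso_act (iso_mult g h) x = iso_act g (iso_act h x)"
  by (simp add: iso_act_def iso_mult_def matrix_vector_mul_assoc matrix_vector_right_distrib add.assoc)

lemma mult_assoc: "iso_mult (iso_mult a b) c = iso_mult a (iso_mult b c)"
  by (simp add: iso_mult_def matrix_mul_assoc matrix_vector_mul_assoc matrix_vector_right_distrib add.assoc)

lemma mult_one_left: "iso_mult iso_one u = u"
  by (simp add: iso_mult_def iso_one_def)

lemma mult_one_right: "iso_mult u iso_one = u"
  by (simp add: iso_mult_def iso_one_def)

lemma act_one: "iso_act iso_one x = x"
  by (simp add: iso_act_def iso_one_def)

lemma iso_invertible: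
  assumes "invertible Q" "u \<in> Iso Q"
  shows "invertible (fst u)"
proof -
  have "det (transpose (fst u) ** Q ** fst u) = det Q" using assms(2) by (simp add: Iso_def)
  hence "det (fst u) * det Q * det (fst u) = det Q" by (simp add: det_mul det_transpose)
  moreover have "det Q \<noteq> 0" using assms(1) by (simp add: invertible_det_nz)
  ultimately have "det (fst u) \<noteq> 0" by auto
  thus ?thesis by (simp add: invertible_det_nz)
qed

lemma inj_act: "invertible (fst u) \<Longrightarrow> iso_act u x = iso_act u y \<Longrightarrow> x = y"
  using inj_matrix_vector_mult unfolding iso_act_def by (auto dest: injD)

lemma mv_neg: "(A::real^'n^'m) *v (- x) = - (A *v x)"
  by (simp add: vec_eq_iff matrix_vector_mult_def sum_negf)

lemma mult_inv_right:
  assumes "invertible (fst u)"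
  shows "iso_mult u (iso_inv u) = iso_one"
proof -
  have r: "fst u ** matrix_inv (fst u) = mat 1"
    using assms unfolding invertible_def matrix_inv_def by (rule someI_ex[THEN conjunct1])
  show ?thesis using r by (simp add: iso_mult_def iso_inv_def iso_one_def
      matrix_vector_mul_assoc mv_neg)
qed

lemma Psi_lcoset:
  assumes "u \<in> U" "iso_one \<in> U"
  shows "Psi U (stabilizer U p) p (lcoset u (stabilizer U p)) = iso_act u p"
proof -
  let ?Up = "stabilizer U p"
  have ex: "\<exists>v. v \<in> U \<and> lcoset u ?Up = lcoset v ?Up" using assms by blast
  define v where "v = (SOME v. v \<in> U \<and> lcoset u ?Up = lcoset v ?Up)"
  have v: "v \<in> U \<and> lcoset u ?Up = lcoset v ?Up" unfolding v_def by (rule someI_ex[OF ex])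
  have "iso_one \<in> ?Up" using assms by (simp add: stabilizer_def act_one)
  hence "v \<in> lcoset v ?Up" unfolding lcoset_def using mult_one_right by (metis image_eqI)
  hence "v \<in> lcoset u ?Up" using v by simp
  then obtain s where s: "s \<in> ?Up" "v = iso_mult u s" unfolding lcoset_def by auto
  have "Psi U ?Up p (lcoset u ?Up) = iso_act v p" unfolding Psi_def v_def by simp
  also have "\<dots> = iso_act u p" using s by (simp add: act_mult stabilizer_def)
  finally show ?thesis .
qed

theorem lemma6p7:
  fixes Q :: "real^'n^'n" and G L U :: "'n::finite aff set" and p :: "real^'n"
  assumes "transpose Q = Q" and "invertible Q"
    and "is_subgroup Q G" and "zariski_closed G"
    and "L = centralizer Q G"
    and "\<forall>x y. \<exists>l\<in>L. iso_act l x = y"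
    and "unipotent_radical Q L U"
    and "\<forall>x y. \<exists>u\<in>U. iso_act u x = y"
  shows "(\<forall>u\<in>U. Psi U (stabilizer U p) p `
              (right_orbit u (set_stabilizer U (orbit G p)) (stabilizer U p))
            = orbit G (iso_act u p))
       \<and> bij_betw (\<lambda>Orb. Psi U (stabilizer U p) p ` Orb)
           {right_orbit u (set_stabilizer U (orbit G p)) (stabilizer U p) | u. u \<in> U}
           {orbit G x | x. True}"
proof -
  let ?Up = "stabilizer U p"
  let ?F = "orbit G p"
  let ?UF = "set_stabilizer U ?F"
  let ?ro = "\<lambda>u. right_orbit u ?UF ?Up"
  let ?f = "\<lambda>Orb. Psi U ?Up p ` Orb"
  have sgU: "is_subgroup Q U" and UL: "U \<subseteq> L" using assms(7)
    by (auto simp: unipotent_radical_def conn_normal_unip_subgroup_def is_normal_in_def)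
  have UIso: "U \<subseteq> Iso Q" and oneU: "iso_one \<in> U"
    and mulU: "\<And>x y. x \<in> U \<Longrightarrow> y \<in> U \<Longrightarrow> iso_mult x y \<in> U"
    and invU: "\<And>x. x \<in> U \<Longrightarrow> iso_inv x \<in> U"
    using sgU by (auto simp: is_subgroup_def)
  have oneG: "iso_one \<in> G" and mulG: "\<And>x y. x \<in> G \<Longrightarrow> y \<in> G \<Longrightarrow> iso_mult x y \<in> G"
    using assms(3) by (auto simp: is_subgroup_def)
  have comm: "\<And>u g x. u \<in> U \<Longrightarrow> g \<in> G \<Longrightarrow> iso_act u (iso_act g x) = iso_act g (iso_act u x)"
  proof -
    fix u g x assume "u \<in> U" "g \<in> G"
    hence "iso_mult u g = iso_mult g u" using UL assms(5) by (auto simp: centralizer_def)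
    thus "iso_act u (iso_act g x) = iso_act g (iso_act u x)" by (metis act_mult)
  qed
  have pF: "p \<in> ?F" using oneG by (metis orbit_def act_one image_eqI)
  have UF_char: "\<And>w. w \<in> ?UF \<longleftrightarrow> w \<in> U \<and> iso_act w p \<in> ?F"
  proof
    fix w assume "w \<in> ?UF" thus "w \<in> U \<and> iso_act w p \<in> ?F" using pF
      by (auto simp: set_stabilizer_def)
  next
    fix w assume w: "w \<in> U \<and> iso_act w p \<in> ?F"
    then obtain g where g: "g \<in> G" "iso_act w p = iso_act g p" by (auto simp: orbit_def)
    have "iso_act w ` ?F \<subseteq> ?F"
    proof
      fix y assume "y \<in> iso_act w ` ?F"
      then obtain h where h: "h \<in> G" "y = iso_act w (iso_act h p)" by (auto simp: orbit_def)
      hence "y = iso_act (iso_mult h g) p" using comm w g by (simp add: act_mult)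
      thus "y \<in> ?F" using mulG h g by (auto simp: orbit_def)
    qed
    thus "w \<in> ?UF" using w by (simp add: set_stabilizer_def)
  qed
  have UF_mul: "\<And>w w'. w \<in> ?UF \<Longrightarrow> w' \<in> ?UF \<Longrightarrow> iso_mult w w' \<in> ?UF"
  proof -
    fix w w' assume a: "w \<in> ?UF" "w' \<in> ?UF"
    hence "iso_act w ` ?F \<subseteq> ?F" "iso_act w' ` ?F \<subseteq> ?F" "w \<in> U" "w' \<in> U"
      by (auto simp: set_stabilizer_def)
    thus "iso_mult w w' \<in> ?UF" using mulU
      by (auto simp: set_stabilizer_def act_mult image_subset_iff)
  qed
  have UF_U: "?UF \<subseteq> U" by (auto simp: set_stabilizer_def)
  have UFp: "(\<lambda>w. iso_act w p) ` ?UF = ?F"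
  proof
    show "(\<lambda>w. iso_act w p) ` ?UF \<subseteq> ?F" using UF_char by auto
    show "?F \<subseteq> (\<lambda>w. iso_act w p) ` ?UF"
    proof
      fix y assume y: "y \<in> ?F"
      obtain w where w: "w \<in> U" "iso_act w p = y" using assms(8) by blast
      hence "w \<in> ?UF" using UF_char y by auto
      thus "y \<in> (\<lambda>w. iso_act w p) ` ?UF" using w by force
    qed
  qed
  have part1: "\<And>u. u \<in> U \<Longrightarrow> ?f (?ro u) = orbit G (iso_act u p)"
  proof -
    fix u assume u: "u \<in> U"
    have "?f (?ro u) = (\<lambda>w. Psi U ?Up p (lcoset (iso_mult u w) ?Up)) ` ?UF"
      unfolding right_orbit_def by auto
    also have "\<dots> = (\<lambda>w. iso_act u (iso_act w p)) ` ?UF"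
      using Psi_lcoset[OF mulU[OF u] oneU] UF_U u by (intro image_cong) (auto simp: act_mult)
    also have "\<dots> = iso_act u ` ((\<lambda>w. iso_act w p) ` ?UF)" by auto
    also have "\<dots> = iso_act u ` ?F" using UFp by simp
    also have "\<dots> = orbit G (iso_act u p)"
      unfolding orbit_def image_image using comm u by (intro image_cong) auto
    finally show "?f (?ro u) = orbit G (iso_act u p)" .
  qed
  have sub: "\<And>u1 u2. u1 \<in> U \<Longrightarrow> u2 \<in> U \<Longrightarrow> orbit G (iso_act u1 p) = orbit G (iso_act u2 p)
      \<Longrightarrow> ?ro u2 \<subseteq> ?ro u1"
  proof -
    fix u1 u2 assume u: "u1 \<in> U" "u2 \<in> U" and eq: "orbit G (iso_act u1 p) = orbit G (iso_act u2 p)"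
    have "iso_act u2 p \<in> orbit G (iso_act u2 p)" using oneG act_one by (metis orbit_def image_eqI)
    hence "iso_act u2 p \<in> orbit G (iso_act u1 p)" using eq by simp
    then obtain g where g: "g \<in> G" "iso_act u2 p = iso_act g (iso_act u1 p)"
      unfolding orbit_def by blast
    define w where "w = iso_mult (iso_inv u1) u2"
    have wU: "w \<in> U" using u invU mulU w_def by auto
    have inv1: "invertible (fst u1)" using iso_invertible[OF assms(2), of u1] UIso u by auto
    have u2eq: "u2 = iso_mult u1 w" unfolding w_def
      by (metis mult_assoc mult_inv_right[OF inv1] mult_one_left)
    have "iso_act u1 (iso_act w p) = iso_act u1 (iso_act g p)"
      using g u2eq comm[OF u(1) g(1)] by (simp add: act_mult)
    hence "iso_act w p = iso_act g p"
      using inj_act[OF inv1] by blast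
    hence "iso_act w p \<in> ?F" using g by (auto simp: orbit_def)
    hence wUF: "w \<in> ?UF" using UF_char wU by auto
    show "?ro u2 \<subseteq> ?ro u1"
    proof
      fix C assume "C \<in> ?ro u2"
      then obtain w' where "w' \<in> ?UF" "C = lcoset (iso_mult u2 w') ?Up"
        by (auto simp: right_orbit_def)
      moreover hence "C = lcoset (iso_mult u1 (iso_mult w w')) ?Up"
        using u2eq mult_assoc by metis
      ultimately show "C \<in> ?ro u1" using UF_mul[OF wUF] unfolding right_orbit_def by blast
    qed
  qed
  have inj: "inj_on ?f {?ro u | u. u \<in> U}"
  proof (rule inj_onI)
    fix A B assume "A \<in> {?ro u | u. u \<in> U}" "B \<in> {?ro u | u. u \<in> U}" "?f A = ?f B"
    then obtain u1 u2 where "u1 \<in> U" "u2 \<in> U" "A = ?ro u1" "B = ?ro u2"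
      "orbit G (iso_act u1 p) = orbit G (iso_act u2 p)" using part1 by auto
    thus "A = B" using sub by (metis subset_antisym)
  qed
  have img: "?f ` {?ro u | u. u \<in> U} = {orbit G x | x. True}"
  proof
    show "?f ` {?ro u | u. u \<in> U} \<subseteq> {orbit G x | x. True}" using part1 by auto
    show "{orbit G x | x. True} \<subseteq> ?f ` {?ro u | u. u \<in> U}"
    proof
      fix O' assume "O' \<in> {orbit G x | x. True}"
      then obtain x where x: "O' = orbit G x" by auto
      obtain u where u: "u \<in> U" "iso_act u p = x" using assms(8) by blast
      hence "O' = ?f (?ro u)" using part1 x by simp
      thus "O' \<in> ?f ` {?ro u | u. u \<in> U}" using u by blast
    qed
  qed
  show ?thesis using part1 inj img by (simp add: bij_betw_def)
qed

end
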